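(* (a) For each $f\in\mathcal{F}_\mathrm{convex}^\nearrow(0,\infty)$ define $\hat f(t):=\sup_{x>0}\{xt-f(x)\}$ for $t\in(0,\infty)$. Then $\hat f\in\mathcal{F}_\mathrm{convex}^\nearrow(0,\infty)$, and $f\mapsto\hat f$ is an involutive bijection on $\mathcal{F}_\mathrm{convex}^\nearrow(0,\infty)$, i.e., $\hat{\hat f}=f$ for all $f\in\mathcal{F}_\mathrm{convex}^\nearrow(0,\infty)$. (b) For every $f\in\mathcal{F}_\mathrm{convex}^\nearrow(0,\infty)$ and every $B\in\mathbb{M}_n^+$, $$\mathrm{Tr}\, f(B)=\sup_{A\in\mathbb{P}_n}\{\mathrm{Tr}\, AB-\mathrm{Tr}\,\hat f(A)\},$$ where $f$ is continuously extended to $[0,\infty)$. (c) Let $f$ be a non-constant, non-decreasing function on $(0,\infty)$ and $0<r<1$. Then $x\mapsto f(x^{1-r})$ is convex on $(0,\infty)$ if and only if $f\in\mathcal{F}_\mathrm{convex}^\nearrow(0,\infty)$ and $x\mapsto\hat f(x^r)$ is concave on $(0,\infty)$.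
   Context: $\mathcal{F}_\mathrm{convex}^\nearrow(0,\infty)$ is the set of non-decreasing convex real functions $f$ on $(0,\infty)$ such that $\lim_{x\to\infty}f(x)/x=+\infty$. $\mathbb{M}_n^+$: positive semidefinite $n\times n$ complex matrices; $\mathbb{P}_n$: positive definite ones; $\mathrm{Tr}$: usual trace. *)

theory Defs
  imports "HOL-Analysis.Analysis"
begin

text \<open>Functions on (0,infinity) are represented as total functions real => real;
  only their values on {0<..} matter.\<close>

definition F_convex_incr :: "(real \<Rightarrow> real) \<Rightarrow> bool" where
  "F_convex_incr f \<longleftrightarrow>
     mono_on {0<..} f \<and> convex_on {0<..} f \<and>
     filterlim (\<lambda>x. f x / x) at_top at_top"

definition conj_fun :: "(real \<Rightarrow> real) \<Rightarrow> real \<Rightarrow> real" where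
  "conj_fun f t = (SUP x\<in>{0<..}. x * t - f x)"

definition ext0 :: "(real \<Rightarrow> real) \<Rightarrow> real \<Rightarrow> real" where
  "ext0 f x = (if 0 < x then f x else Lim (at_right 0) f)"

definition adjoint_mat :: "complex^'n^'n \<Rightarrow> complex^'n^'n" where
  "adjoint_mat A = (\<chi> i j. cnj (A $ j $ i))"

definition unitary_mat :: "complex^'n^'n \<Rightarrow> bool" where
  "unitary_mat U \<longleftrightarrow> adjoint_mat U ** U = mat 1"

definition hermitian_mat :: "complex^'n^'n \<Rightarrow> bool" where
  "hermitian_mat A \<longleftrightarrow> adjoint_mat A = A"

definition quad_form :: "complex^'n^'n \<Rightarrow> complex^'n \<Rightarrow> complex" where
  "quad_form A x = (\<Sum>i\<in>UNIV. cnj (x $ i) * (A *v x) $ i)"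

definition psd_mat :: "complex^'n^'n \<Rightarrow> bool" where
  "psd_mat A \<longleftrightarrow> hermitian_mat A \<and> (\<forall>x. 0 \<le> Re (quad_form A x))"

definition pd_mat :: "complex^'n^'n \<Rightarrow> bool" where
  "pd_mat A \<longleftrightarrow> hermitian_mat A \<and> (\<forall>x. x \<noteq> 0 \<longrightarrow> 0 < Re (quad_form A x))"

definition diag_mat :: "('n \<Rightarrow> complex) \<Rightarrow> complex^'n^'n" where
  "diag_mat d = (\<chi> i j. if i = j then d i else 0)"

text \<open>Functional calculus for Hermitian matrices via a unitary diagonalisation
  A = U diag(lambda) U^*, giving f(A) = U diag(f(lambda)) U^* (independent of the choice).\<close>
definition mat_fun :: "(real \<Rightarrow> real) \<Rightarrow> complex^'n^'n \<Rightarrow> complex^'n^'n" where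
  "mat_fun f A = (SOME M. \<exists>U (lam :: 'n \<Rightarrow> real).
      unitary_mat U \<and> A = U ** diag_mat (\<lambda>i. complex_of_real (lam i)) ** adjoint_mat U \<and>
      M = U ** diag_mat (\<lambda>i. complex_of_real (f (lam i))) ** adjoint_mat U)"

end

theory Submission
  imports Defs
begin

lemma F_props:
  assumes "F_convex_incr f"
  shows "mono_on {0<..} f" "convex_on {0<..} f" "filterlim (\<lambda>x. f x / x) at_top at_top"
  using assms unfolding F_convex_incr_def by auto

lemma F_superlin:
  assumes "F_convex_incr f"
  shows "\<exists>N>0. \<forall>x\<ge>N. M * x \<le> f x"
proof -
  have "eventually (\<lambda>x. M \<le> f x / x) at_top"
    using F_props(3)[OF assms] unfolding filterlim_at_top by blast
  then obtain N where N: "\<And>x. x \<ge> N \<Longrightarrow> M \<le> f x / x"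
    by (auto simp: eventually_at_top_linorder)
  show ?thesis
  proof (intro exI[of _ "max N 1"] conjI allI impI)
    fix x assume "max N 1 \<le> x"
    then have "x > 0" "M \<le> f x / x" using N by auto
    then show "M * x \<le> f x" by (simp add: le_divide_eq)
  qed simp
qed

lemma F_lb:
  assumes "F_convex_incr f"
  shows "\<forall>x>0. 2 * f 1 - f 2 \<le> f x"
proof (intro allI impI)
  fix x :: real assume x: "x > 0"
  have mono: "mono_on {0<..} f" and cv: "convex_on {0<..} f" using F_props[OF assms] by auto
  have f12: "f 1 \<le> f 2" using mono by (auto intro: mono_onD)
  show "2 * f 1 - f 2 \<le> f x"
  proof (cases "x \<ge> 1")
    case True
    then have "f 1 \<le> f x" using mono by (auto intro: mono_onD)
    then show ?thesis using f12 by simp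
  next
    case False
    have "(f x - f 1) / (x - 1) \<le> (f x - f 2) / (x - 2)"
      using convex_on_slope_le(1)[OF cv, of x 2 1] x False by auto
    have s: "(f x - f 2) / (x - 2) \<le> (f 1 - f 2) / (1 - 2)"
      using convex_on_slope_le(2)[OF cv, of x 2 1] x False by auto
    have "f x - f 2 \<ge> (f 1 - f 2) / (1 - 2) * (x - 2)"
      using s False by (simp add: divide_le_eq) 
    moreover have "(f 2 - f 1)*(x-2) \<ge> (f 2 - f 1) * (-2)"
      using f12 x by (intro mult_left_mono) auto
    ultimately show ?thesis by simp
  qed
qed

lemma conj_bdd:
  assumes F: "F_convex_incr f" and t: "t > 0"
  shows "bdd_above ((\<lambda>x. x * t - f x) ` {0<..})"
proof -
  obtain N where N: "N > 0" "\<And>x. x \<ge> N \<Longrightarrow> t * x \<le> f x"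
    using F_superlin[OF F, of t] by auto
  have lb: "\<And>x. x > 0 \<Longrightarrow> 2 * f 1 - f 2 \<le> f x" using F_lb[OF F] by auto
  show ?thesis
  proof (rule bdd_aboveI2)
    fix x :: real assume "x \<in> {0<..}"
    then have x: "x > 0" by simp
    show "x * t - f x \<le> max 0 (N * t - (2 * f 1 - f 2))"
    proof (cases "x \<ge> N")
      case True then show ?thesis using N(2)[of x] by (simp add: mult.commute)
    next
      case False
      then have "x * t \<le> N * t" using t by (intro mult_right_mono) auto
      then show ?thesis using lb[OF x] by simp
    qed
  qed
qed

lemma conj_ge:
  assumes F: "F_convex_incr f" and t: "t > 0" and x: "x > 0"
  shows "x * t - f x \<le> conj_fun f t"
  unfolding conj_fun_def using conj_bdd[OF F t] x by (intro cSUP_upper) auto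

lemma conj_le:
  assumes "\<And>x. x > 0 \<Longrightarrow> x * t - f x \<le> c"
  shows "conj_fun f t \<le> c"
  unfolding conj_fun_def using assms by (intro cSUP_least) auto

lemma conj_mono:
  assumes F: "F_convex_incr f"
  shows "mono_on {0<..} (conj_fun f)"
proof (rule mono_onI)
  fix s t :: real assume "s \<in> {0<..}" "t \<in> {0<..}" "s \<le> t"
  then show "conj_fun f s \<le> conj_fun f t"
  proof (intro conj_le)
    fix x :: real assume x: "x > 0"
    have "x * s - f x \<le> x * t - f x" using x \<open>s \<le> t\<close> by (simp add: mult_left_mono)
    also have "\<dots> \<le> conj_fun f t" using conj_ge[OF F _ x, of t] \<open>t \<in> {0<..}\<close> by simp
    finally show "x * s - f x \<le> conj_fun f t" .
  qed
qed

lemma conj_convex: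
  assumes F: "F_convex_incr f"
  shows "convex_on {0<..} (conj_fun f)"
proof (rule convex_onI)
  fix u s t :: real assume u: "u > 0" "u < 1" and s: "s \<in> {0<..}" and t: "t \<in> {0<..}"
  have p: "(1 - u) *\<^sub>R s + u *\<^sub>R t > 0" using u s t
    by (simp add: add_pos_nonneg add_pos_pos)
  show "conj_fun f ((1 - u) *\<^sub>R s + u *\<^sub>R t) \<le> (1 - u) * conj_fun f s + u * conj_fun f t"
  proof (rule conj_le)
    fix x :: real assume x: "x > 0"
    have "x * ((1 - u) *\<^sub>R s + u *\<^sub>R t) - f x = (1-u) * (x * s - f x) + u * (x * t - f x)"
      by (simp add: algebra_simps)
    also have "\<dots> \<le> (1 - u) * conj_fun f s + u * conj_fun f t"
      using conj_ge[OF F _ x, of s] conj_ge[OF F _ x, of t] s t u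
      by (intro add_mono mult_left_mono) auto
    finally show "x * ((1 - u) *\<^sub>R s + u *\<^sub>R t) - f x \<le> (1 - u) * conj_fun f s + u * conj_fun f t" .
  qed
qed (simp add: convex_real_interval)

lemma conj_superlin:
  assumes F: "F_convex_incr f"
  shows "filterlim (\<lambda>t. conj_fun f t / t) at_top at_top"
  unfolding filterlim_at_top
proof
  fix Z :: real
  define x where "x = \<bar>Z\<bar> + 1"
  have x: "x > 0" unfolding x_def by simp
  show "eventually (\<lambda>t. Z \<le> conj_fun f t / t) at_top"
    unfolding eventually_at_top_linorder
  proof (intro exI[of _ "\<bar>f x\<bar> + 1"] allI impI)
    fix t assume t: "\<bar>f x\<bar> + 1 \<le> t"
    then have tp: "t > 0" by linarith
    have "x * t - f x \<le> conj_fun f t" using conj_ge[OF F tp x] .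
    moreover have "f x \<le> t" using t by linarith
    ultimately have "(x - 1) * t \<le> conj_fun f t" by (simp add: algebra_simps)
    moreover have "Z * t \<le> (x - 1) * t" using tp unfolding x_def by (intro mult_right_mono) auto
    ultimately have "Z * t \<le> conj_fun f t" by linarith
    then show "Z \<le> conj_fun f t / t" using tp by (simp add: le_divide_eq)
  qed
qed

lemma conj_F:
  assumes F: "F_convex_incr f"
  shows "F_convex_incr (conj_fun f)"
  unfolding F_convex_incr_def using conj_mono[OF F] conj_convex[OF F] conj_superlin[OF F] by auto

lemma subgrad:
  assumes F: "F_convex_incr f" and x: "x > 0"
  shows "\<exists>d\<ge>0. \<forall>y>0. f x + d * (y - x) \<le> f y"
proof -
  have mono: "mono_on {0<..} f" and cv: "convex_on {0<..} f" using F_props[OF F] by auto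
  define D where "D = (\<lambda>z. (f z - f x) / (z - x)) ` {x<..}"
  define d where "d = Inf D"
  have ne: "D \<noteq> {}" unfolding D_def by auto
  have sl: "(f y - f x) / (y - x) \<le> (f z - f x) / (z - x)" if "0 < y" "y < x" "x < z" for y z
  proof -
    have "(f y - f x) / (y - x) \<le> (f y - f z) / (y - z)"
      using convex_on_slope_le(1)[OF cv, of y z x] that by auto
    also have "\<dots> \<le> (f x - f z) / (x - z)"
      using convex_on_slope_le(2)[OF cv, of y z x] that by auto
    also have "\<dots> = (f z - f x) / (z - x)" by (simp add: divide_simps) argo
    finally show ?thesis .
  qed
  have bdd: "bdd_below D"
    unfolding D_def using sl[of "x/2"] x by (intro bdd_belowI2) auto
  have pos: "0 \<le> e" if "e \<in> D" for e
  proof -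
    from that obtain z where z: "z > x" "e = (f z - f x) / (z - x)" unfolding D_def by auto
    have "f x \<le> f z" using mono z x by (auto intro: mono_onD)
    then show ?thesis using z by simp
  qed
  have d0: "d \<ge> 0" unfolding d_def using ne pos by (intro cInf_greatest) auto
  have "f x + d * (y - x) \<le> f y" if y: "y > 0" for y
  proof (cases "y > x")
    case True
    have "d \<le> (f y - f x) / (y - x)" unfolding d_def using bdd True
      by (intro cInf_lower) (auto simp: D_def)
    then show ?thesis using True by (simp add: le_divide_eq algebra_simps)
  next
    case False
    show ?thesis
    proof (cases "y = x")
      case True then show ?thesis by simp
    next
      case False
      with \<open>\<not> y > x\<close> have yx: "y < x" by simp
      have "(f y - f x) / (y - x) \<le> d" unfolding d_def using ne
        by (intro cInf_greatest) (auto simp: D_def intro!: sl y yx)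
      then show ?thesis using yx by (simp add: divide_le_eq algebra_simps)
    qed
  qed
  with d0 show ?thesis by blast
qed

lemma near_subgrad:
  assumes F: "F_convex_incr f" and x: "x > 0" and e: "e > 0"
  shows "\<exists>t>0. \<forall>y>0. y * t - f y \<le> x * t - f x + e"
proof -
  obtain d where d: "d \<ge> 0" "\<And>y. y > 0 \<Longrightarrow> f x + d * (y - x) \<le> f y"
    using subgrad[OF F x] by auto
  obtain N where N: "N > 0" "\<And>y. y \<ge> N \<Longrightarrow> (d + 2) * y \<le> f y"
    using F_superlin[OF F, of "d+2"] by auto
  define Y where "Y = max (max N (x+1)) \<bar>f x\<bar>"
  define \<eta> where "\<eta> = min 1 (e / (Y - x))"
  have Yx: "Y - x \<ge> 1" unfolding Y_def by auto
  have \<eta>: "\<eta> > 0" "\<eta> \<le> 1" "\<eta> * (Y - x) \<le> e"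
    unfolding \<eta>_def using e Yx by (auto simp: min_def le_divide_eq)
  show ?thesis
  proof (intro exI[of _ "d + \<eta>"] conjI allI impI)
    show "d + \<eta> > 0" using d \<eta> by simp
    fix y :: real assume y: "y > 0"
    show "y * (d + \<eta>) - f y \<le> x * (d + \<eta>) - f x + e"
    proof (cases "y \<ge> Y")
      case True
      then have "(d + 2) * y \<le> f y" using N(2)[of y] unfolding Y_def by auto
      moreover have "y * (d + \<eta>) \<le> y * (d + 1)" using y \<eta> by (intro mult_left_mono) auto
      moreover have "\<bar>f x\<bar> \<le> y" using True unfolding Y_def by auto
      moreover have "0 \<le> x * (d + \<eta>)" using x d \<eta> by simp
      ultimately show ?thesis using e by (simp add: algebra_simps)
    next
      case False
      have 1: "y * (d + \<eta>) - f y \<le> y * (d + \<eta>) - f x - d * (y - x)" using d(2)[OF y] by simp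
      have 2: "y * (d + \<eta>) - f x - d * (y - x) = x * (d + \<eta>) - f x + \<eta> * (y - x)" by (simp add: algebra_simps)
      have 3: "\<eta> * (y - x) \<le> e"
      proof (cases "y \<le> x")
        case True then show ?thesis using \<eta> e by (smt (verit) mult_nonneg_nonpos)
      next
        case False
        have "\<eta> * (y - x) \<le> \<eta> * (Y - x)" using \<open>\<not> y \<ge> Y\<close> \<eta> by (intro mult_left_mono) auto
        then show ?thesis using \<eta> by linarith
      qed
      show ?thesis using 1 2 3 by linarith
    qed
  qed
qed

lemma conj_conj:
  assumes F: "F_convex_incr f" and x: "x > 0"
  shows "conj_fun (conj_fun f) x = f x"
proof (rule antisym)
  show "conj_fun (conj_fun f) x \<le> f x"
  proof (rule conj_le)
    fix t :: real assume t: "t > 0"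
    show "t * x - conj_fun f t \<le> f x" using conj_ge[OF F t x] by (simp add: mult.commute)
  qed
  show "f x \<le> conj_fun (conj_fun f) x"
  proof (rule field_le_epsilon)
    fix e :: real assume e: "e > 0"
    obtain t where t: "t > 0" "\<And>y. y > 0 \<Longrightarrow> y * t - f y \<le> x * t - f x + e"
      using near_subgrad[OF F x e] by auto
    have "conj_fun f t \<le> x * t - f x + e" using t by (intro conj_le) auto
    then have "f x - e \<le> t * x - conj_fun f t" by (simp add: algebra_simps)
    also have "\<dots> \<le> conj_fun (conj_fun f) x" using conj_ge[OF conj_F[OF F] x t(1)] by simp
    finally show "f x \<le> conj_fun (conj_fun f) x + e" by simp
  qed
qed

lemma powr_key:
  fixes a w r :: real
  assumes "a > 0" "w > 0"
  shows "a powr (1 - r) * (a * w) powr r = a * w powr r"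
proof -
  have "a powr (1 - r) * (a * w) powr r = (a powr (1 - r) * a powr r) * w powr r"
    using assms by (simp add: powr_mult)
  also have "a powr (1 - r) * a powr r = a"
    using assms by (simp add: powr_add[symmetric])
  finally show ?thesis .
qed

lemma joint_concave:
  fixes a1 a2 b1 b2 u r :: real
  assumes a: "a1 > 0" "a2 > 0" and b: "b1 > 0" "b2 > 0" and u: "0 \<le> u" "u \<le> 1"
    and r: "0 \<le> r" "r \<le> 1"
  shows "(1 - u) * (a1 powr (1 - r) * b1 powr r) + u * (a2 powr (1 - r) * b2 powr r)
     \<le> ((1 - u) * a1 + u * a2) powr (1 - r) * ((1 - u) * b1 + u * b2) powr r"
proof -
  define A where "A = (1 - u) * a1 + u * a2"
  define B where "B = (1 - u) * b1 + u * b2"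
  have A: "A > 0" unfolding A_def using a u
    by (cases "u = 0") (auto intro: add_nonneg_pos add_pos_nonneg)
  have B: "B > 0" unfolding B_def using b u
    by (cases "u = 0") (auto intro: add_nonneg_pos add_pos_nonneg)
  define K where "K = A powr (1 - r) * B powr r"
  have K: "K > 0" unfolding K_def using A B by simp
  have each: "x powr (1 - r) * y powr r \<le> K * ((1 - r) * (x / A) + r * (y / B))"
    if "x > 0" "y > 0" for x y
  proof -
    have "x powr (1 - r) * y powr r = K * ((x / A) powr (1 - r) * (y / B) powr r)"
      unfolding K_def using that A B by (simp add: powr_divide field_simps)
    also have "\<dots> \<le> K * ((1 - r) * (x / A) + r * (y / B))"
      using Youngs_inequality_0[of "1 - r" r "x / A" "y / B"] that A B r K
      by (intro mult_left_mono) auto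
    finally show ?thesis .
  qed
  have "(1 - u) * (a1 powr (1 - r) * b1 powr r) + u * (a2 powr (1 - r) * b2 powr r)
      \<le> (1 - u) * (K * ((1 - r) * (a1 / A) + r * (b1 / B))) + u * (K * ((1 - r) * (a2 / A) + r * (b2 / B)))"
    using each[OF a(1) b(1)] each[OF a(2) b(2)] u by (intro add_mono mult_left_mono) auto
  also have "\<dots> = K * ((1 - r) * (((1 - u) * a1 + u * a2) / A) + r * (((1 - u) * b1 + u * b2) / B))"
    using A B by (simp add: field_simps)
  also have "\<dots> = K" using A B unfolding A_def[symmetric] B_def[symmetric] by simp
  finally show ?thesis unfolding K_def A_def B_def .
qed

lemma c_back:
  assumes F: "F_convex_incr f" and r: "0 < r" "r < 1"
    and h: "concave_on {0<..} (\<lambda>x. conj_fun f (x powr r))"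
  shows "convex_on {0<..} (\<lambda>x. f (x powr (1 - r)))"
proof (rule convex_onI)
  define H where "H = (\<lambda>x. conj_fun f (x powr r))"
  fix u y1 y2 :: real assume u: "0 < u" "u < 1" and y1: "y1 \<in> {0<..}" and y2: "y2 \<in> {0<..}"
  define y where "y = (1 - u) * y1 + u * y2"
  have y: "y > 0" unfolding y_def using u y1 y2 by (simp add: add_pos_pos)
  have hc: "(1 - u) * H a + u * H b \<le> H ((1 - u) * a + u * b)" if "a > 0" "b > 0" for a b
    using h that u unfolding concave_on_iff H_def by (auto simp: mult.commute)
  have fk: "yk * w powr r - H (yk * w) \<le> f (yk powr (1 - r))" if "yk > 0" "w > 0" for yk w
  proof -
    have "yk * w powr r = yk powr (1 - r) * (yk * w) powr r" using powr_key[OF that] by simp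
    moreover have "yk powr (1 - r) * (yk * w) powr r - f (yk powr (1 - r)) \<le> H (yk * w)"
      unfolding H_def using that by (intro conj_ge[OF F]) auto
    ultimately show ?thesis by simp
  qed
  have "f (y powr (1 - r)) = conj_fun (conj_fun f) (y powr (1 - r))"
    using conj_conj[OF F, of "y powr (1 - r)"] y by simp
  also have "\<dots> \<le> (1 - u) * f (y1 powr (1 - r)) + u * f (y2 powr (1 - r))"
  proof (rule conj_le)
    fix t :: real assume t: "t > 0"
    define w where "w = t powr (1 / r) / y"
    have w: "w > 0" unfolding w_def using t y by simp
    have yw: "(y * w) powr r = t" unfolding w_def using y t r by (simp add: powr_powr)
    have e1: "t * y powr (1 - r) = y * w powr r"
      using powr_key[OF y w, of r] yw by (simp only: mult.commute)
    have e2: "conj_fun f t = H (y * w)" unfolding H_def yw ..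
    have e3: "y * w = (1 - u) * (y1 * w) + u * (y2 * w)" unfolding y_def by (simp add: algebra_simps)
    have e4: "(1 - u) * H (y1 * w) + u * H (y2 * w) \<le> H (y * w)"
      unfolding e3 using y1 y2 w by (intro hc) auto
    have e5: "(1 - u) * (y1 * w powr r - H (y1 * w)) \<le> (1 - u) * f (y1 powr (1 - r))"
      using fk[of y1 w] y1 w u by (intro mult_left_mono) auto
    have e6: "u * (y2 * w powr r - H (y2 * w)) \<le> u * f (y2 powr (1 - r))"
      using fk[of y2 w] y2 w u by (intro mult_left_mono) auto
    have "t * y powr (1 - r) - conj_fun f t = y * w powr r - H (y * w)" using e1 e2 by simp
    also have "\<dots> \<le> (1 - u) * (y1 * w powr r - H (y1 * w)) + u * (y2 * w powr r - H (y2 * w))"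
      using e4 unfolding y_def by (simp add: algebra_simps)
    also have "\<dots> \<le> (1 - u) * f (y1 powr (1 - r)) + u * f (y2 powr (1 - r))" using e5 e6 by simp
    finally show "t * y powr (1 - r) - conj_fun f t \<le> (1 - u) * f (y1 powr (1 - r)) + u * f (y2 powr (1 - r))" .
  qed
  finally show "f (((1 - u) *\<^sub>R y1 + u *\<^sub>R y2) powr (1 - r))
      \<le> (1 - u) * f (y1 powr (1 - r)) + u * f (y2 powr (1 - r))" unfolding y_def by simp
qed (simp add: convex_real_interval)

lemma pos_comb:
  fixes a b u :: real
  assumes "0 \<le> u" "u \<le> 1" "a > 0" "b > 0"
  shows "(1 - u) * a + u * b > 0"
proof -
  have "(1 - u) * min a b \<le> (1 - u) * a" using assms by (intro mult_left_mono) auto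
  moreover have "u * min a b \<le> u * b" using assms by (intro mult_left_mono) auto
  moreover have "(1 - u) * min a b + u * min a b = min a b" by (simp add: algebra_simps)
  ultimately show ?thesis using assms by linarith
qed

lemma c_fwd:
  assumes mono: "mono_on {0<..} f" and nc: "\<exists>x>0. \<exists>y>0. f x \<noteq> f y"
    and r: "0 < r" "r < 1"
    and g: "convex_on {0<..} (\<lambda>x. f (x powr (1 - r)))"
  shows "F_convex_incr f \<and> concave_on {0<..} (\<lambda>x. conj_fun f (x powr r))"
proof -
  define p where "p = 1 - r"
  have p: "0 < p" "p < 1" unfolding p_def using r by auto
  define G where "G = (\<lambda>x. f (x powr p))"
  define k where "k = (\<lambda>x::real. x powr (1 / p))"
  have gc: "convex_on {0<..} G" using g unfolding G_def p_def .
  have Gmono: "G x \<le> G y" if "0 < x" "x \<le> y" for x y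
    unfolding G_def using that p by (intro mono_onD[OF mono]) (auto intro: powr_mono2)
  have fG: "f x = G (k x)" if "x > 0" for x
    unfolding G_def k_def using that p by (simp add: powr_powr)
  have kpos: "k x > 0" if "x > 0" for x unfolding k_def using that by simp
  have kconv: "convex_on {0<..} k" unfolding k_def using p by (intro powr_convex) simp
  have kp: "(k x) powr p = x" if "x > 0" for x unfolding k_def using that p by (simp add: powr_powr)
  have fconv: "convex_on {0<..} f"
  proof (rule convex_onI)
    fix t a b :: real assume t: "0 < t" "t < 1" and a: "a \<in> {0<..}" and b: "b \<in> {0<..}"
    have ab: "(1 - t) *\<^sub>R a + t *\<^sub>R b > 0" using t a b by (simp add: add_pos_pos)
    have "f ((1 - t) *\<^sub>R a + t *\<^sub>R b) = G (k ((1 - t) *\<^sub>R a + t *\<^sub>R b))" using fG ab by simp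
    also have "\<dots> \<le> G ((1 - t) * k a + t * k b)"
      using convex_onD[OF kconv, of t a b] t a b kpos ab by (intro Gmono) auto
    also have "\<dots> \<le> (1 - t) * G (k a) + t * G (k b)"
      using convex_onD[OF gc, of t "k a" "k b"] t a b kpos by auto
    also have "\<dots> = (1 - t) * f a + t * f b" using fG a b by simp
    finally show "f ((1 - t) *\<^sub>R a + t *\<^sub>R b) \<le> (1 - t) * f a + t * f b" .
  qed (simp add: convex_real_interval)
  obtain a b where ab: "a > 0" "b > 0" "f a < f b"
  proof -
    from nc obtain x y where "x > 0" "y > 0" "f x \<noteq> f y" by auto
    show ?thesis
    proof (cases "f x < f y")
      case True then show ?thesis using that \<open>x > 0\<close> \<open>y > 0\<close> by blast
    next
      case False
      then have "f y < f x" using \<open>f x \<noteq> f y\<close> by linarith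
      then show ?thesis using that \<open>x > 0\<close> \<open>y > 0\<close> by blast
    qed
  qed
  have alb: "a < b"
  proof (rule ccontr)
    assume "\<not> a < b"
    then have "f b \<le> f a" using ab by (intro mono_onD[OF mono]) auto
    then show False using ab by simp
  qed
  define x1 where "x1 = k a"
  define x2 where "x2 = k b"
  have x12: "0 < x1" "x1 < x2" unfolding x1_def x2_def k_def using ab alb p
    by (auto intro: powr_less_mono2)
  have Gx12: "G x1 = f a" "G x2 = f b" unfolding x1_def x2_def using fG ab by auto
  define s where "s = (G x2 - G x1) / (x2 - x1)"
  have s: "s > 0" unfolding s_def using x12 Gx12 ab by simp
  have Gge: "G x2 + s * (x - x2) \<le> G x" if "x \<ge> x2" for x
  proof (cases "x = x2")
    case False
    with that have xx: "x > x2" by simp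
    have "(G x1 - G x2) / (x1 - x2) \<le> (G x1 - G x) / (x1 - x)"
      using convex_on_slope_le(1)[OF gc, of x1 x x2] x12 xx by auto
    also have "\<dots> \<le> (G x2 - G x) / (x2 - x)"
      using convex_on_slope_le(2)[OF gc, of x1 x x2] x12 xx by auto
    finally have "s \<le> (G x - G x2) / (x - x2)" unfolding s_def
      by (smt (verit, ccfv_SIG) minus_divide_divide)
    then show ?thesis using xx by (simp add: le_divide_eq algebra_simps)
  qed simp
  define C where "C = G x2 - s * x2"
  have fge: "C + s * k y \<le> f y" if "y \<ge> b" for y
  proof -
    have "x2 \<le> k y" unfolding x2_def k_def using that ab p by (intro powr_mono2) auto
    then show ?thesis using Gge[of "k y"] fG[of y] that ab unfolding C_def by (simp add: algebra_simps)
  qed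
  define q where "q = r / p"
  have q: "q > 0" unfolding q_def using r p by simp
  have kq: "k y = y * y powr q" if "y > 0" for y
  proof -
    have "1 / p = 1 + q" unfolding q_def p_def using r by (simp add: field_simps)
    then show ?thesis unfolding k_def using that by (simp add: powr_add)
  qed
  have superlin: "filterlim (\<lambda>x. f x / x) at_top at_top"
    unfolding filterlim_at_top
  proof
    fix M :: real
    define Y where "Y = max (max b 1) (max \<bar>C\<bar> (((\<bar>M\<bar> + 1) / s) powr (1 / q)))"
    show "eventually (\<lambda>y. M \<le> f y / y) at_top"
      unfolding eventually_at_top_linorder
    proof (intro exI[of _ Y] allI impI)
      fix y assume yY: "Y \<le> y"
      have y: "y > 0" "y \<ge> b" "y \<ge> \<bar>C\<bar>" using yY unfolding Y_def by auto
      have "((\<bar>M\<bar> + 1) / s) powr (1 / q) \<le> y" using yY unfolding Y_def by auto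
      then have "(((\<bar>M\<bar> + 1) / s) powr (1 / q)) powr q \<le> y powr q"
        using q by (intro powr_mono2) auto
      also have "(((\<bar>M\<bar> + 1) / s) powr (1 / q)) powr q = (\<bar>M\<bar> + 1) / s"
        using q s by (simp add: powr_powr)
      finally have "\<bar>M\<bar> + 1 \<le> s * y powr q" using s by (simp add: divide_le_eq mult.commute)
      then have "(\<bar>M\<bar> + 1) * y \<le> (s * y powr q) * y" using y(1)
        by (intro mult_right_mono) auto
      also have "(s * y powr q) * y = s * k y" using kq[OF y(1)] by (simp add: algebra_simps)
      finally have 1: "(\<bar>M\<bar> + 1) * y \<le> s * k y" .
      have 2: "M * y \<le> \<bar>M\<bar> * y" using y(1) by (intro mult_right_mono) auto
      have 3: "(\<bar>M\<bar> + 1) * y = \<bar>M\<bar> * y + y" by (simp add: algebra_simps)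
      have "M * y \<le> f y" using fge[OF y(2)] y(3) 1 2 3 by linarith
      then show "M \<le> f y / y" using y by (simp add: le_divide_eq)
    qed
  qed
  have F: "F_convex_incr f" unfolding F_convex_incr_def using mono fconv superlin by auto
  define H where "H = (\<lambda>x. conj_fun f (x powr r))"
  have core: "(1 - u) * (x1 * s1 powr r - f x1) + u * (x2 * s2 powr r - f x2) \<le> H ((1 - u) * s1 + u * s2)"
    if u: "0 \<le> u" "u \<le> 1" and xs: "x1 > 0" "x2 > 0" "s1 > 0" "s2 > 0" for u x1 x2 s1 s2
  proof -
    define y where "y = (1 - u) * k x1 + u * k x2"
    define sv where "sv = (1 - u) * s1 + u * s2"
    have y: "y > 0" unfolding y_def using kpos xs u by (intro pos_comb) auto
    have sv: "sv > 0" unfolding sv_def using xs u by (intro pos_comb) auto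
    have j: "(1 - u) * (k x1 powr p * s1 powr r) + u * (k x2 powr p * s2 powr r) \<le> y powr p * sv powr r"
      unfolding y_def sv_def p_def using joint_concave[of "k x1" "k x2" s1 s2 u r] kpos xs u r by auto
    have cv: "G y \<le> (1 - u) * G (k x1) + u * G (k x2)"
      using convex_onD[OF gc, of u "k x1" "k x2"] u kpos xs unfolding y_def by auto
    have cg: "y powr p * sv powr r - f (y powr p) \<le> H sv"
      unfolding H_def using y sv by (intro conj_ge[OF F]) auto
    have "(1 - u) * (x1 * s1 powr r - f x1) + u * (x2 * s2 powr r - f x2)
        = ((1 - u) * (k x1 powr p * s1 powr r) + u * (k x2 powr p * s2 powr r)) - ((1 - u) * G (k x1) + u * G (k x2))"
      using kp xs fG by (simp add: algebra_simps)
    also have "\<dots> \<le> y powr p * sv powr r - G y" using j cv by simp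
    also have "\<dots> \<le> H sv" using cg unfolding G_def .
    finally show ?thesis unfolding sv_def .
  qed
  have conc: "concave_on {0<..} H"
    unfolding concave_on_def
  proof (rule convex_onI)
    fix u s1 s2 :: real assume u: "0 < u" "u < 1" and s1: "s1 \<in> {0<..}" and s2: "s2 \<in> {0<..}"
    define Hs where "Hs = H ((1 - u) * s1 + u * s2)"
    have step1: "u * H s2 \<le> Hs - (1 - u) * (x1 * s1 powr r - f x1)" if x1: "x1 > 0" for x1
    proof -
      have "H s2 \<le> (Hs - (1 - u) * (x1 * s1 powr r - f x1)) / u"
        unfolding H_def
      proof (rule conj_le)
        fix x2 :: real assume x2: "x2 > 0"
        have "(1 - u) * (x1 * s1 powr r - f x1) + u * (x2 * s2 powr r - f x2) \<le> Hs"
          unfolding Hs_def using core[of u x1 x2 s1 s2] u x1 x2 s1 s2 by auto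
        then show "x2 * s2 powr r - f x2 \<le> (Hs - (1 - u) * (x1 * s1 powr r - f x1)) / u"
          using u by (simp add: le_divide_eq algebra_simps)
      qed
      then show ?thesis using u by (simp add: le_divide_eq algebra_simps)
    qed
    have "H s1 \<le> (Hs - u * H s2) / (1 - u)"
      unfolding H_def
    proof (rule conj_le)
      fix x1 :: real assume x1: "x1 > 0"
      show "x1 * s1 powr r - f x1 \<le> (Hs - u * conj_fun f (s2 powr r)) / (1 - u)"
        using step1[OF x1] u unfolding H_def by (simp add: le_divide_eq algebra_simps)
    qed
    then have "(1 - u) * H s1 + u * H s2 \<le> Hs" using u by (simp add: le_divide_eq algebra_simps)
    then show "- H ((1 - u) *\<^sub>R s1 + u *\<^sub>R s2) \<le> (1 - u) * - H s1 + u * - H s2"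
      unfolding Hs_def by simp
  qed (simp add: convex_real_interval)
  show ?thesis using F conc unfolding H_def by simp
qed

lemma partC:
  assumes mono: "mono_on {0<..} f" and nc: "\<exists>x>0. \<exists>y>0. f x \<noteq> f y"
    and r: "0 < r" "r < 1"
  shows "convex_on {0<..} (\<lambda>x. f (x powr (1 - r))) \<longleftrightarrow>
         F_convex_incr f \<and> concave_on {0<..} (\<lambda>x. conj_fun f (x powr r))"
  using c_fwd[OF mono nc r] c_back[OF _ r] by blast

definition cinner :: "complex^'n \<Rightarrow> complex^'n \<Rightarrow> complex" where
  "cinner x y = (\<Sum>i\<in>UNIV. cnj (x$i) * y$i)"

lemma quad_form_cinner: "quad_form A x = cinner x (A *v x)"
  by (simp add: quad_form_def cinner_def)

lemma cinner_add_right: "cinner x (y + z) = cinner x y + cinner x z"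
  by (simp add: cinner_def sum.distrib distrib_left)
lemma cinner_add_left: "cinner (x + y) z = cinner x z + cinner y z"
  by (simp add: cinner_def sum.distrib distrib_right)
lemma cinner_diff_right: "cinner x (y - z) = cinner x y - cinner x z"
  by (simp add: cinner_def sum_subtractf right_diff_distrib)
lemma cinner_diff_left: "cinner (x - y) z = cinner x z - cinner y z"
  by (simp add: cinner_def sum_subtractf left_diff_distrib)
lemma cinner_scale_right: "cinner x (c *s y) = c * cinner x y"
  by (simp add: cinner_def sum_distrib_left algebra_simps)
lemma cinner_scale_left: "cinner (c *s x) y = cnj c * cinner x y"
  by (simp add: cinner_def sum_distrib_left algebra_simps)
lemma cinner_zero_left[simp]: "cinner 0 y = 0" by (simp add: cinner_def)
lemma cinner_zero_right[simp]: "cinner x 0 = 0" by (simp add: cinner_def)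
lemma cinner_commute: "cinner y x = cnj (cinner x y)"
  by (simp add: cinner_def mult.commute)

lemma cnj_mult_self: "cnj z * z = complex_of_real ((cmod z)^2)"
  by (metis complex_norm_square mult.commute)

lemma cinner_self: "cinner x x = of_real ((norm x)^2)"
proof -
  have "(norm x)^2 = (\<Sum>i\<in>UNIV. (norm (x$i))^2)"
    unfolding norm_vec_def L2_set_def by (simp add: sum_nonneg)
  then have "complex_of_real ((norm x)^2) = (\<Sum>i\<in>UNIV. complex_of_real ((norm (x$i))^2))"
    by (simp only: of_real_sum)
  then show ?thesis unfolding cinner_def cnj_mult_self by simp
qed

lemma cinner_self_Re: "Re (cinner x x) = (norm x)^2"
  by (simp add: cinner_self)

lemma cinner_self_eq_0: "cinner x x = 0 \<longleftrightarrow> x = 0"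
  by (simp add: cinner_self)

lemma herm_entry: "hermitian_mat A \<Longrightarrow> A $ i $ j = cnj (A $ j $ i)"
  unfolding hermitian_mat_def adjoint_mat_def by (metis complex_cnj_cnj vec_lambda_beta)

lemma herm_cinner:
  assumes "hermitian_mat A"
  shows "cinner x (A *v y) = cinner (A *v x) y"
proof -
  have "cinner x (A *v y) = (\<Sum>i\<in>UNIV. \<Sum>j\<in>UNIV. cnj (x$i) * A$i$j * y$j)"
    unfolding cinner_def matrix_vector_mult_def by (simp add: sum_distrib_left mult.assoc)
  also have "\<dots> = (\<Sum>j\<in>UNIV. \<Sum>i\<in>UNIV. cnj (x$i) * A$i$j * y$j)" by (rule sum.swap)
  also have "\<dots> = (\<Sum>j\<in>UNIV. \<Sum>i\<in>UNIV. cnj (A$j$i * x$i) * y$j)"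
  proof (intro sum.cong refl)
    fix i j
    have "A$i$j = cnj (A$j$i)" by (rule herm_entry[OF assms])
    then show "cnj (x$i) * A$i$j * y$j = cnj (A$j$i * x$i) * y$j" by simp
  qed
  also have "\<dots> = cinner (A *v x) y"
    unfolding cinner_def matrix_vector_mult_def
    by (simp add: sum_distrib_right)
  finally show ?thesis .
qed

lemma scaleR_smult: "r *\<^sub>R (v::complex^'n) = complex_of_real r *s v"
  unfolding vec_eq_iff by (simp add: complex_eq_iff)

lemma mv_smult: "A *v (c *s x) = c *s (A *v (x::complex^'n))"
  by (simp add: vec_eq_iff matrix_vector_mult_def sum_distrib_left algebra_simps)

lemma vec_subspace_real: "vec.subspace S \<Longrightarrow> subspace (S :: (complex^'n) set)"
  unfolding subspace_def vec.subspace_def by (auto simp: scaleR_smult)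

lemma quad_nonpos_zero:
  fixes a b :: real
  assumes "\<And>t. a * t + b * t^2 \<le> 0"
  shows "a = 0"
proof (rule ccontr)
  assume a: "a \<noteq> 0"
  define K where "K = \<bar>b\<bar> + 1"
  have K: "K > 0" unfolding K_def by simp
  define t where "t = a / (2 * K)"
  have "4 * K^2 * (a * t + b * t^2) = a^2 * (2 * K + b)"
    using K by (simp add: t_def field_simps power2_eq_square)
  moreover have "a^2 * (2 * K + b) > 0" using a unfolding K_def by (intro mult_pos_pos) auto
  moreover have "4 * K^2 * (a * t + b * t^2) \<le> 0"
    using assms[of t] K by (intro mult_nonneg_nonpos) auto
  ultimately show False by linarith
qed

lemma cont_quad: "continuous_on UNIV (\<lambda>x::complex^'n. Re (quad_form A x))"
  unfolding quad_form_def matrix_vector_mult_def by (intro continuous_intros)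

lemma quad_expand:
  assumes H: "hermitian_mat A"
  shows "Re (cinner (v + complex_of_real t *s w) (A *v (v + complex_of_real t *s w)))
     = Re (cinner v (A *v v)) + 2 * t * Re (cinner w (A *v v)) + t^2 * Re (cinner w (A *v w))"
proof -
  have c: "Re (cinner v (A *v w)) = Re (cinner w (A *v v))"
    using herm_cinner[OF H, of v w] cinner_commute[of "A *v v" w] by simp
  have "cinner (v + complex_of_real t *s w) (A *v (v + complex_of_real t *s w))
     = cinner v (A *v v) + complex_of_real t * cinner v (A *v w) + complex_of_real t * cinner w (A *v v)
       + complex_of_real t * complex_of_real t * cinner w (A *v w)"
    by (simp add: matrix_vector_right_distrib mv_smult cinner_add_left cinner_add_right
        cinner_scale_left cinner_scale_right algebra_simps)
  then show ?thesis using c by (simp add: power2_eq_square algebra_simps)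
qed

lemma norm_expand:
  shows "Re (cinner (v + complex_of_real t *s w) (v + complex_of_real t *s w))
     = Re (cinner v v) + 2 * t * Re (cinner w v) + t^2 * Re (cinner w w)"
proof -
  have c: "Re (cinner v w) = Re (cinner w v)"
    using cinner_commute[of v w] by simp
  have "cinner (v + complex_of_real t *s w) (v + complex_of_real t *s w)
     = cinner v v + complex_of_real t * cinner v w + complex_of_real t * cinner w v
       + complex_of_real t * complex_of_real t * cinner w w"
    by (simp add: cinner_add_left cinner_add_right cinner_scale_left cinner_scale_right algebra_simps)
  then show ?thesis using c by (simp add: power2_eq_square algebra_simps)
qed

lemma quad_scale: "Re (quad_form A (r *\<^sub>R x)) = r^2 * Re (quad_form A x)"
  unfolding quad_form_cinner scaleR_smult mv_smult cinner_scale_left cinner_scale_right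
  by (simp add: power2_eq_square)

lemma eigvec_exists:
  assumes H: "hermitian_mat A" and S: "vec.subspace S" and inv: "\<forall>x\<in>S. A *v x \<in> S"
    and ne: "\<exists>x\<in>S. x \<noteq> 0"
  shows "\<exists>v\<in>S. cinner v v = 1 \<and> (\<exists>l::real. A *v v = complex_of_real l *s v)"
proof -
  define Q where "Q = (\<lambda>x. Re (quad_form A x))"
  have Sr: "subspace S" using vec_subspace_real[OF S] .
  define K where "K = S \<inter> sphere 0 1"
  have cK: "compact K" unfolding K_def using closed_subspace[OF Sr] by (intro closed_Int_compact) auto
  from ne obtain x0 where x0: "x0 \<in> S" "x0 \<noteq> 0" by auto
  have "(1 / norm x0) *\<^sub>R x0 \<in> K" unfolding K_def using x0 Sr by (auto intro: subspace_scale)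
  then have neK: "K \<noteq> {}" by auto
  obtain v where v: "v \<in> K" "\<And>y. y \<in> K \<Longrightarrow> Q y \<le> Q v"
    using continuous_attains_sup[OF cK neK continuous_on_subset[OF cont_quad[of A]]] unfolding Q_def by auto
  define l where "l = Q v"
  have vS: "v \<in> S" and nv: "norm v = 1" using v(1) unfolding K_def by auto
  have bound: "Q x \<le> l * (norm x)^2" if "x \<in> S" for x
  proof (cases "x = 0")
    case True then show ?thesis by (simp add: Q_def quad_form_cinner)
  next
    case False
    define y where "y = (1 / norm x) *\<^sub>R x"
    have "y \<in> K" unfolding K_def y_def using that False Sr by (auto intro: subspace_scale)
    then have "Q y \<le> l" using v(2) unfolding l_def by auto
    moreover have "Q y = Q x / (norm x)^2" unfolding Q_def y_def quad_scale
      by (simp add: power_divide)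
    ultimately show ?thesis using False by (simp add: divide_le_eq mult.commute)
  qed
  define z where "z = A *v v - complex_of_real l *s v"
  have Re0: "Re (cinner w z) = 0" if w: "w \<in> S" for w
  proof -
    have "\<And>t. 2 * (Re (cinner w (A *v v)) - l * Re (cinner w v)) * t + (Q w - l * Re (cinner w w)) * t^2 \<le> 0"
    proof -
      fix t :: real
      have xS: "v + complex_of_real t *s w \<in> S"
        using vS w S by (auto intro: vec.subspace_add vec.subspace_scale)
      have "Q (v + complex_of_real t *s w) \<le> l * (norm (v + complex_of_real t *s w))^2" using bound[OF xS] .
      also have "(norm (v + complex_of_real t *s w))^2 = Re (cinner (v + complex_of_real t *s w) (v + complex_of_real t *s w))"
        by (simp add: cinner_self_Re)
      also have "\<dots> = 1 + 2 * t * Re (cinner w v) + t^2 * Re (cinner w w)"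
        unfolding norm_expand using nv by (simp add: cinner_self_Re)
      finally have "Q v + 2 * t * Re (cinner w (A *v v)) + t^2 * Q w \<le> l * (1 + 2 * t * Re (cinner w v) + t^2 * Re (cinner w w))"
        unfolding Q_def quad_form_cinner quad_expand[OF H] .
      then show "2 * (Re (cinner w (A *v v)) - l * Re (cinner w v)) * t + (Q w - l * Re (cinner w w)) * t^2 \<le> 0"
        unfolding l_def by (simp add: algebra_simps)
    qed
    then have "2 * (Re (cinner w (A *v v)) - l * Re (cinner w v)) = 0" by (rule quad_nonpos_zero)
    then show ?thesis unfolding z_def cinner_diff_right cinner_scale_right by simp
  qed
  have cz: "cinner w z = 0" if w: "w \<in> S" for w
  proof -
    have "\<i> *s w \<in> S" using w S by (auto intro: vec.subspace_scale)
    then have "Re (cinner (\<i> *s w) z) = 0" by (rule Re0)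
    then have "Im (cinner w z) = 0" unfolding cinner_scale_left by simp
    then show ?thesis using Re0[OF w] by (simp add: complex_eq_iff)
  qed
  have zS: "z \<in> S" unfolding z_def using inv vS S by (auto intro: vec.subspace_diff vec.subspace_scale)
  have "z = 0" using cz[OF zS] by (simp add: cinner_self_eq_0)
  then have "A *v v = complex_of_real l *s v" unfolding z_def by simp
  moreover have "cinner v v = 1" using nv by (simp add: cinner_self)
  ultimately show ?thesis using vS by blast
qed

definition orthonormal :: "(complex^'n) set \<Rightarrow> bool" where
  "orthonormal E \<longleftrightarrow> (\<forall>e\<in>E. cinner e e = 1) \<and> (\<forall>e\<in>E. \<forall>e'\<in>E. e \<noteq> e' \<longrightarrow> cinner e e' = 0)"

lemma cinner_sum_right: "cinner x (\<Sum>i\<in>I. f i) = (\<Sum>i\<in>I. cinner x (f i))"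
  by (induction I rule: infinite_finite_induct) (auto simp: cinner_add_right)

lemma spectral_sub:
  assumes H: "hermitian_mat A"
  shows "vec.subspace S \<Longrightarrow> (\<forall>x\<in>S. A *v x \<in> S) \<Longrightarrow>
    \<exists>E. finite E \<and> E \<subseteq> S \<and> orthonormal E \<and> (\<forall>e\<in>E. \<exists>l::real. A *v e = complex_of_real l *s e)
      \<and> S \<subseteq> vec.span E"
proof (induction "vec.dim S" arbitrary: S rule: less_induct)
  case less
  show ?case
  proof (cases "\<exists>x\<in>S. x \<noteq> 0")
    case False
    then have "S \<subseteq> vec.span {}" by auto
    then show ?thesis by (intro exI[of _ "{}"]) (auto simp: orthonormal_def)
  next
    case True
    obtain v l where v: "v \<in> S" "cinner v v = 1" "A *v v = complex_of_real l *s v"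
      using eigvec_exists[OF H less.prems True] by auto
    define S' where "S' = {x\<in>S. cinner v x = 0}"
    have sub': "vec.subspace S'"
      using less.prems(1) unfolding S'_def vec.subspace_def
      by (auto simp: cinner_add_right cinner_scale_right)
    have inv': "\<forall>x\<in>S'. A *v x \<in> S'"
    proof
      fix x assume x: "x \<in> S'"
      have "cinner v (A *v x) = cinner (A *v v) x" by (rule herm_cinner[OF H])
      also have "\<dots> = 0" using x unfolding v(3) cinner_scale_left S'_def by simp
      finally show "A *v x \<in> S'" using x less.prems(2) unfolding S'_def by auto
    qed
    have "v \<notin> S'" unfolding S'_def using v by auto
    then have "S' \<subset> S" using v unfolding S'_def by blast
    then have "vec.span S' \<subset> vec.span S"
      using sub' less.prems(1) by (simp add: vec.span_eq_iff[THEN iffD2])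
    then have "vec.dim S' < vec.dim S" by (rule vec.dim_psubset)
    then obtain E' where E': "finite E'" "E' \<subseteq> S'" "orthonormal E'"
      "\<forall>e\<in>E'. \<exists>l::real. A *v e = complex_of_real l *s e" "S' \<subseteq> vec.span E'"
      using less.hyps[OF _ sub' inv'] by blast
    have vE': "v \<notin> E'" using E'(2) v(2) unfolding S'_def by auto
    have orth: "orthonormal (insert v E')"
      unfolding orthonormal_def
    proof (intro conjI ballI impI)
      fix e assume "e \<in> insert v E'"
      then show "cinner e e = 1" using v(2) E'(3) unfolding orthonormal_def by auto
    next
      fix e e' assume e: "e \<in> insert v E'" and e': "e' \<in> insert v E'" and ne: "e \<noteq> e'"
      have z1: "cinner v e'' = 0" if "e'' \<in> E'" for e'' using that E'(2) unfolding S'_def by auto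
      have z2: "cinner e'' v = 0" if "e'' \<in> E'" for e''
        using z1[OF that] cinner_commute[of e'' v] by simp
      show "cinner e e' = 0"
        using e e' ne z1 z2 E'(3) unfolding orthonormal_def by auto
    qed
    have span: "S \<subseteq> vec.span (insert v E')"
    proof
      fix x assume x: "x \<in> S"
      define c where "c = cinner v x"
      have "x - c *s v \<in> S'"
        unfolding S'_def c_def using x v less.prems(1)
        by (auto simp: cinner_diff_right cinner_scale_right intro: vec.subspace_diff vec.subspace_scale)
      then have "x - c *s v \<in> vec.span (insert v E')"
        using E'(5) vec.span_mono[of E' "insert v E'"] by auto
      moreover have "c *s v \<in> vec.span (insert v E')"
        by (intro vec.span_scale vec.span_base) simp
      ultimately have "(x - c *s v) + c *s v \<in> vec.span (insert v E')" by (rule vec.span_add)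
      then show "x \<in> vec.span (insert v E')" by simp
    qed
    show ?thesis
      using E' v orth span unfolding S'_def by (intro exI[of _ "insert v E'"]) auto
  qed
qed

lemma diag_right: "(M ** diag_mat d) $ i $ j = M $ i $ j * d j"
  unfolding matrix_matrix_mult_def diag_mat_def
  by (simp add: if_distrib[of "\<lambda>x. _ * x"] cong: if_cong)

lemma diag_left: "(diag_mat d ** M) $ i $ j = d i * M $ i $ j"
  unfolding matrix_matrix_mult_def diag_mat_def
  by (simp add: if_distrib[of "\<lambda>x. x * _"] cong: if_cong)

lemma adjoint_entry: "adjoint_mat M $ i $ j = cnj (M $ j $ i)"
  by (simp add: adjoint_mat_def)

lemma mat1_entry: "(mat 1 :: complex^'n^'n) $ i $ j = (if i = j then 1 else 0)"
  by (simp add: mat_def)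

lemma unitary_right: "unitary_mat U \<Longrightarrow> U ** adjoint_mat U = mat 1"
  unfolding unitary_mat_def using matrix_left_right_inverse by blast

lemma orthonormal_indep:
  assumes fin: "finite E" and on: "orthonormal E"
  shows "vec.independent E"
  unfolding vec.independent_explicit
proof (intro conjI allI impI ballI fin)
  fix c v assume s: "(\<Sum>v\<in>E. c v *s v) = 0" and v: "v \<in> E"
  have "0 = cinner v (\<Sum>e\<in>E. c e *s e)" using s by simp
  also have "\<dots> = (\<Sum>e\<in>E. c e * cinner v e)" by (simp add: cinner_sum_right cinner_scale_right)
  also have "\<dots> = c v * cinner v v + (\<Sum>e\<in>E - {v}. c e * cinner v e)"
    by (rule sum.remove[OF fin v])
  also have "(\<Sum>e\<in>E - {v}. c e * cinner v e) = 0"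
    using on v unfolding orthonormal_def by (intro sum.neutral) auto
  also have "c v * cinner v v + 0 = c v" using on v by (simp add: orthonormal_def)
  finally show "c v = 0" by simp
qed

lemma spectral:
  assumes H: "hermitian_mat (A :: complex^'n^'n)"
  shows "\<exists>U (lam :: 'n \<Rightarrow> real). unitary_mat U \<and> A = U ** diag_mat (\<lambda>i. complex_of_real (lam i)) ** adjoint_mat U"
proof -
  obtain E where E: "finite E" "orthonormal E" "\<forall>e\<in>E. \<exists>l::real. A *v e = complex_of_real l *s e"
    "UNIV \<subseteq> vec.span E"
    using spectral_sub[OF H, of UNIV] by (auto simp: vec.subspace_UNIV)
  have "card E = vec.dim (UNIV :: (complex^'n) set)"
    using E orthonormal_indep[OF E(1,2)] by (intro vec.basis_card_eq_dim) auto
  then have "card (UNIV :: 'n set) = card E" by (simp add: vec_dim_card card_cart_basis)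
  then obtain \<phi> where \<phi>: "bij_betw \<phi> (UNIV :: 'n set) E"
    using finite_same_card_bij[OF finite E(1)] by blast
  define lam where "lam = (\<lambda>j. SOME l::real. A *v \<phi> j = complex_of_real l *s \<phi> j)"
  have lam: "A *v \<phi> j = complex_of_real (lam j) *s \<phi> j" for j
  proof -
    have "\<phi> j \<in> E" using \<phi> by (auto simp: bij_betw_def)
    then have "\<exists>l::real. A *v \<phi> j = complex_of_real l *s \<phi> j" using E(3) by auto
    then show ?thesis unfolding lam_def by (rule someI_ex)
  qed
  define U :: "complex^'n^'n" where "U = (\<chi> i j. \<phi> j $ i)"
  define D where "D = diag_mat (\<lambda>i. complex_of_real (lam i))"
  have uni: "unitary_mat U"
    unfolding unitary_mat_def
  proof (subst vec_eq_iff, intro allI, subst vec_eq_iff, intro allI)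
    fix i j
    have "(adjoint_mat U ** U) $ i $ j = cinner (\<phi> i) (\<phi> j)"
      by (simp add: matrix_matrix_mult_def adjoint_mat_def U_def cinner_def)
    also have "\<dots> = (if i = j then 1 else 0)"
    proof (cases "i = j")
      case True then show ?thesis using E(2) \<phi> by (auto simp: orthonormal_def bij_betw_def)
    next
      case False
      then have "\<phi> i \<noteq> \<phi> j" using \<phi> by (auto simp: bij_betw_def inj_on_def)
      then show ?thesis using E(2) \<phi> False by (auto simp: orthonormal_def bij_betw_def)
    qed
    finally show "(adjoint_mat U ** U) $ i $ j = mat 1 $ i $ j" by (simp add: mat1_entry)
  qed
  have AU: "A ** U = U ** D"
  proof (subst vec_eq_iff, intro allI, subst vec_eq_iff, intro allI)
    fix i j
    have "(A ** U) $ i $ j = (A *v \<phi> j) $ i"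
      by (simp add: matrix_matrix_mult_def matrix_vector_mult_def U_def)
    also have "\<dots> = complex_of_real (lam j) * \<phi> j $ i" by (simp add: lam)
    also have "\<dots> = (U ** D) $ i $ j" unfolding D_def diag_right by (simp add: U_def)
    finally show "(A ** U) $ i $ j = (U ** D) $ i $ j" .
  qed
  have "A = A ** (U ** adjoint_mat U)" using unitary_right[OF uni] by simp
  also have "\<dots> = U ** D ** adjoint_mat U" by (metis AU matrix_mul_assoc)
  finally show ?thesis using uni unfolding D_def by blast
qed

lemma adjoint_mult: "adjoint_mat (A ** B) = adjoint_mat B ** adjoint_mat (A :: complex^'n^'n)"
  by (simp add: vec_eq_iff adjoint_mat_def matrix_matrix_mult_def mult.commute)

lemma adjoint_adjoint[simp]: "adjoint_mat (adjoint_mat A) = A"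
  by (simp add: vec_eq_iff adjoint_mat_def)

lemma adjoint_rdiag: "adjoint_mat (diag_mat (\<lambda>i. complex_of_real (d i))) = diag_mat (\<lambda>i. complex_of_real (d i))"
  by (simp add: vec_eq_iff adjoint_mat_def diag_mat_def)

lemma unitary_mult:
  assumes "unitary_mat U" "unitary_mat V"
  shows "unitary_mat (adjoint_mat V ** U)"
proof -
  have "adjoint_mat (adjoint_mat V ** U) ** (adjoint_mat V ** U) = adjoint_mat U ** ((V ** adjoint_mat V) ** U)"
    by (simp add: adjoint_mult matrix_mul_assoc)
  also have "\<dots> = mat 1" using assms unitary_right[OF assms(2)] by (simp add: unitary_mat_def)
  finally show ?thesis unfolding unitary_mat_def .
qed

lemma unitary_rows:
  assumes "unitary_mat W"
  shows "(\<Sum>j\<in>UNIV. (cmod (W $ i $ j))^2) = 1"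
proof -
  have "(W ** adjoint_mat W) $ i $ i = 1" using unitary_right[OF assms] by (simp add: mat1_entry)
  then have "(\<Sum>j\<in>UNIV. complex_of_real ((cmod (W $ i $ j))^2)) = 1"
    by (simp add: matrix_matrix_mult_def adjoint_mat_def complex_norm_square del: of_real_power)
  then have "complex_of_real (\<Sum>j\<in>UNIV. (cmod (W $ i $ j))^2) = 1" by (simp only: of_real_sum)
  then show ?thesis by (simp only: of_real_eq_1_iff)
qed

lemma unitary_cols:
  assumes "unitary_mat W"
  shows "(\<Sum>i\<in>UNIV. (cmod (W $ i $ j))^2) = 1"
proof -
  have "(adjoint_mat W ** W) $ j $ j = 1" using assms by (simp add: unitary_mat_def mat1_entry)
  then have "(\<Sum>i\<in>UNIV. complex_of_real ((cmod (W $ i $ j))^2)) = 1"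
    by (simp add: matrix_matrix_mult_def adjoint_mat_def cnj_mult_self del: of_real_power)
  then have "complex_of_real (\<Sum>i\<in>UNIV. (cmod (W $ i $ j))^2) = 1" by (simp only: of_real_sum)
  then show ?thesis by (simp only: of_real_eq_1_iff)
qed

lemma eig_unique_sum:
  fixes U V :: "complex^'n^'n" and a c :: "'n \<Rightarrow> real" and g :: "real \<Rightarrow> real"
  assumes U: "unitary_mat U" and V: "unitary_mat V"
    and eq: "U ** diag_mat (\<lambda>i. complex_of_real (a i)) ** adjoint_mat U
           = V ** diag_mat (\<lambda>i. complex_of_real (c i)) ** adjoint_mat V"
  shows "(\<Sum>i\<in>UNIV. g (c i)) = (\<Sum>j\<in>UNIV. g (a j))"
proof -
  define Da where "Da = diag_mat (\<lambda>i. complex_of_real (a i))"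
  define Dc where "Dc = diag_mat (\<lambda>i. complex_of_real (c i))"
  define W where "W = adjoint_mat V ** U"
  have Wu: "unitary_mat W" unfolding W_def using unitary_mult[OF U V] .
  have UU: "adjoint_mat U ** U = mat 1" using U by (simp add: unitary_mat_def)
  have VV: "adjoint_mat V ** V = mat 1" using V by (simp add: unitary_mat_def)
  have "adjoint_mat V ** (U ** Da ** adjoint_mat U) ** U = W ** Da"
    unfolding W_def by (metis matrix_mul_assoc matrix_mul_rid UU)
  moreover have "adjoint_mat V ** (V ** Dc ** adjoint_mat V) ** U = Dc ** W"
  proof -
    have "adjoint_mat V ** (V ** Dc ** adjoint_mat V) ** U = (adjoint_mat V ** V) ** Dc ** (adjoint_mat V ** U)"
      by (simp add: matrix_mul_assoc)
    then show ?thesis unfolding W_def VV by simp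
  qed
  ultimately have comm: "Dc ** W = W ** Da" using eq unfolding Da_def Dc_def by simp
  define P where "P = (\<lambda>i j. (cmod (W $ i $ j))^2)"
  have Pz: "P i j = 0 \<or> c i = a j" for i j
  proof -
    have "(Dc ** W) $ i $ j = (W ** Da) $ i $ j" using comm by simp
    then have "complex_of_real (c i) * W $ i $ j = W $ i $ j * complex_of_real (a j)"
      unfolding Dc_def Da_def diag_left diag_right .
    then have "W $ i $ j = 0 \<or> c i = a j" by (auto simp: mult.commute)
    then show ?thesis unfolding P_def by auto
  qed
  have "(\<Sum>i\<in>UNIV. g (c i)) = (\<Sum>i\<in>UNIV. (\<Sum>j\<in>UNIV. P i j) * g (c i))"
    using unitary_rows[OF Wu] unfolding P_def by simp
  also have "\<dots> = (\<Sum>i\<in>UNIV. \<Sum>j\<in>UNIV. P i j * g (a j))"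
    unfolding sum_distrib_right
  proof (intro sum.cong refl)
    fix i j show "P i j * g (c i) = P i j * g (a j)" using Pz[of i j] by auto
  qed
  also have "\<dots> = (\<Sum>j\<in>UNIV. \<Sum>i\<in>UNIV. P i j * g (a j))" by (rule sum.swap)
  also have "\<dots> = (\<Sum>j\<in>UNIV. (\<Sum>i\<in>UNIV. P i j) * g (a j))" by (simp add: sum_distrib_right)
  also have "\<dots> = (\<Sum>j\<in>UNIV. g (a j))" using unitary_cols[OF Wu] unfolding P_def by simp
  finally show ?thesis .
qed

lemma trace_diag: "trace (diag_mat d) = (\<Sum>i\<in>UNIV. d i)"
  by (simp add: trace_def diag_mat_def)

lemma trace_conj:
  assumes U: "unitary_mat U"
  shows "trace (U ** D ** adjoint_mat U) = trace (D :: complex^'n^'n)"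
proof -
  have "trace (U ** D ** adjoint_mat U) = trace (U ** (D ** adjoint_mat U))" by (simp add: matrix_mul_assoc)
  also have "\<dots> = trace ((D ** adjoint_mat U) ** U)" by (rule trace_mul_sym)
  also have "\<dots> = trace D" using U unfolding unitary_mat_def by (metis matrix_mul_assoc matrix_mul_rid)
  finally show ?thesis .
qed

lemma mat_fun_trace:
  fixes A U :: "complex^'n^'n" and c :: "'n \<Rightarrow> real"
  assumes U: "unitary_mat U" and A: "A = U ** diag_mat (\<lambda>i. complex_of_real (c i)) ** adjoint_mat U"
  shows "Re (trace (mat_fun g A)) = (\<Sum>j\<in>UNIV. g (c j))"
proof -
  let ?P = "\<lambda>M. \<exists>U (lam :: 'n \<Rightarrow> real).
      unitary_mat U \<and> A = U ** diag_mat (\<lambda>i. complex_of_real (lam i)) ** adjoint_mat U \<and>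
      M = U ** diag_mat (\<lambda>i. complex_of_real (g (lam i))) ** adjoint_mat U"
  have "?P (U ** diag_mat (\<lambda>i. complex_of_real (g (c i))) ** adjoint_mat U)" using U A by blast
  then have "?P (mat_fun g A)" unfolding mat_fun_def by (rule someI)
  then obtain V lam where V: "unitary_mat V" "A = V ** diag_mat (\<lambda>i. complex_of_real (lam i)) ** adjoint_mat V"
    "mat_fun g A = V ** diag_mat (\<lambda>i. complex_of_real (g (lam i))) ** adjoint_mat V" by blast
  have "Re (trace (mat_fun g A)) = (\<Sum>i\<in>UNIV. g (lam i))"
    unfolding V(3) trace_conj[OF V(1)] trace_diag by (simp add: Re_sum)
  also have "\<dots> = (\<Sum>j\<in>UNIV. g (c j))"
    by (rule eig_unique_sum[OF U V(1)]) (use A V(2) in simp)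
  finally show ?thesis .
qed

lemma trace_prod:
  fixes U V :: "complex^'n^'n" and a b :: "'n \<Rightarrow> real"
  assumes U: "unitary_mat U" and V: "unitary_mat V"
  shows "Re (trace ((V ** diag_mat (\<lambda>i. complex_of_real (a i)) ** adjoint_mat V) **
                    (U ** diag_mat (\<lambda>i. complex_of_real (b i)) ** adjoint_mat U)))
       = (\<Sum>i\<in>UNIV. \<Sum>k\<in>UNIV. a i * b k * (cmod ((adjoint_mat V ** U) $ i $ k))^2)"
proof -
  define Da where "Da = diag_mat (\<lambda>i. complex_of_real (a i))"
  define Db where "Db = diag_mat (\<lambda>i. complex_of_real (b i))"
  define W where "W = adjoint_mat V ** U"
  have aW: "adjoint_mat W = adjoint_mat U ** V" unfolding W_def by (simp add: adjoint_mult)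
  have "trace ((V ** Da ** adjoint_mat V) ** (U ** Db ** adjoint_mat U))
      = trace (V ** (Da ** adjoint_mat V ** (U ** Db ** adjoint_mat U)))" by (simp add: matrix_mul_assoc)
  also have "\<dots> = trace ((Da ** adjoint_mat V ** (U ** Db ** adjoint_mat U)) ** V)" by (rule trace_mul_sym)
  also have "(Da ** adjoint_mat V ** (U ** Db ** adjoint_mat U)) ** V = Da ** W ** Db ** adjoint_mat W"
    unfolding aW unfolding W_def by (simp add: matrix_mul_assoc)
  also have "trace (Da ** W ** Db ** adjoint_mat W)
      = (\<Sum>i\<in>UNIV. \<Sum>k\<in>UNIV. complex_of_real (a i * b k * (cmod (W $ i $ k))^2))"
  proof -
    have "trace (Da ** W ** Db ** adjoint_mat W) = (\<Sum>i\<in>UNIV. \<Sum>k\<in>UNIV. (Da ** W ** Db) $ i $ k * adjoint_mat W $ k $ i)"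
      by (simp add: trace_def matrix_matrix_mult_def)
    also have "\<dots> = (\<Sum>i\<in>UNIV. \<Sum>k\<in>UNIV. complex_of_real (a i * b k * (cmod (W $ i $ k))^2))"
    proof (intro sum.cong refl)
      fix i k
      have "(Da ** W ** Db) $ i $ k * adjoint_mat W $ k $ i
          = complex_of_real (a i) * complex_of_real (b k) * (cnj (W $ i $ k) * W $ i $ k)"
        unfolding Da_def Db_def diag_right diag_left adjoint_entry by (simp add: algebra_simps)
      also have "\<dots> = complex_of_real (a i * b k * (cmod (W $ i $ k))^2)"
        unfolding cnj_mult_self by simp
      finally show "(Da ** W ** Db) $ i $ k * adjoint_mat W $ k $ i = complex_of_real (a i * b k * (cmod (W $ i $ k))^2)" .
    qed
    finally show ?thesis .
  qed
  finally show ?thesis unfolding Da_def Db_def W_def by (simp add: Re_sum)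
qed

lemma eig_quad:
  fixes U B :: "complex^'n^'n" and b :: "'n \<Rightarrow> real"
  assumes U: "unitary_mat U" and B: "B = U ** diag_mat (\<lambda>i. complex_of_real (b i)) ** adjoint_mat U"
  shows "Re (quad_form B (\<chi> i. U $ i $ j)) = b j" "(\<chi> i. U $ i $ j) \<noteq> 0"
proof -
  define u where "u = (\<chi> i. U $ i $ j)"
  have UU: "adjoint_mat U ** U = mat 1" using U by (simp add: unitary_mat_def)
  have BU: "B ** U = U ** diag_mat (\<lambda>i. complex_of_real (b i))"
    unfolding B by (metis matrix_mul_assoc matrix_mul_rid UU)
  have Bu: "(B *v u) $ i = U $ i $ j * complex_of_real (b j)" for i
  proof -
    have "(B *v u) $ i = (B ** U) $ i $ j" by (simp add: u_def matrix_vector_mult_def matrix_matrix_mult_def)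
    then show ?thesis unfolding BU diag_right .
  qed
  have uu: "(\<Sum>i\<in>UNIV. cnj (U $ i $ j) * U $ i $ j) = 1"
    using arg_cong[OF UU, of "\<lambda>M. M $ j $ j"] by (simp add: matrix_matrix_mult_def adjoint_mat_def mat1_entry)
  have "quad_form B u = (\<Sum>i\<in>UNIV. cnj (U $ i $ j) * U $ i $ j) * complex_of_real (b j)"
    unfolding quad_form_def Bu by (simp add: u_def sum_distrib_right mult.assoc)
  then show "Re (quad_form B (\<chi> i. U $ i $ j)) = b j" unfolding u_def[symmetric] uu by simp
  have "cinner u u = 1" unfolding cinner_def u_def using uu by simp
  then show "(\<chi> i. U $ i $ j) \<noteq> 0" unfolding u_def[symmetric] by auto
qed

lemma psd_eig_nonneg:
  assumes "psd_mat B" "unitary_mat U" "B = U ** diag_mat (\<lambda>i. complex_of_real (b i)) ** adjoint_mat U"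
  shows "b j \<ge> 0"
  using eig_quad(1)[OF assms(2,3), of j] assms(1) unfolding psd_mat_def by metis

lemma pd_eig_pos:
  assumes "pd_mat B" "unitary_mat U" "B = U ** diag_mat (\<lambda>i. complex_of_real (b i)) ** adjoint_mat U"
  shows "b j > 0"
  using eig_quad[OF assms(2,3), of j] assms(1) unfolding pd_mat_def by metis

lemma cinner_adj: "cinner x (M *v y) = cinner (adjoint_mat M *v x) y"
proof -
  have "cinner x (M *v y) = (\<Sum>i\<in>UNIV. \<Sum>j\<in>UNIV. cnj (x$i) * M$i$j * y$j)"
    unfolding cinner_def matrix_vector_mult_def by (simp add: sum_distrib_left mult.assoc)
  also have "\<dots> = (\<Sum>j\<in>UNIV. \<Sum>i\<in>UNIV. cnj (x$i) * M$i$j * y$j)" by (rule sum.swap)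
  also have "cinner (adjoint_mat M *v x) y = (\<Sum>j\<in>UNIV. \<Sum>i\<in>UNIV. cnj (x$i) * M$i$j * y$j)"
    unfolding cinner_def matrix_vector_mult_def adjoint_mat_def
    by (simp add: sum_distrib_left mult_ac)
  finally show ?thesis by simp
qed

lemma pd_construct:
  fixes U :: "complex^'n^'n" and a :: "'n \<Rightarrow> real"
  assumes U: "unitary_mat U" and a: "\<And>j. a j > 0"
  shows "pd_mat (U ** diag_mat (\<lambda>i. complex_of_real (a i)) ** adjoint_mat U)"
proof -
  define Da where "Da = diag_mat (\<lambda>i. complex_of_real (a i))"
  have herm: "hermitian_mat (U ** Da ** adjoint_mat U)"
    unfolding hermitian_mat_def adjoint_mult Da_def adjoint_rdiag adjoint_adjoint
    by (simp add: matrix_mul_assoc)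
  have pos: "0 < Re (quad_form (U ** Da ** adjoint_mat U) x)" if x: "x \<noteq> 0" for x
  proof -
    define y where "y = adjoint_mat U *v x"
    have "y \<noteq> 0"
    proof
      assume "y = 0"
      then have "U *v y = 0" by simp
      moreover have "U *v y = x" unfolding y_def matrix_vector_mul_assoc unitary_right[OF U] by simp
      ultimately show False using x by simp
    qed
    then obtain i where i: "y $ i \<noteq> 0" by (auto simp: vec_eq_iff)
    have Dy: "(Da *v y) $ k = complex_of_real (a k) * y $ k" for k
      unfolding Da_def matrix_vector_mult_def diag_mat_def
      by (simp add: if_distrib[of "\<lambda>x. x * _"] cong: if_cong)
    have "(U ** Da ** adjoint_mat U) *v x = U *v (Da *v y)" unfolding y_def by (metis matrix_vector_mul_assoc)
    then have "quad_form (U ** Da ** adjoint_mat U) x = cinner x (U *v (Da *v y))"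
      unfolding quad_form_cinner by simp
    also have "\<dots> = cinner y (Da *v y)" unfolding cinner_adj y_def ..
    also have "\<dots> = (\<Sum>k\<in>UNIV. complex_of_real (a k * (cmod (y $ k))^2))"
      unfolding cinner_def Dy
    proof (intro sum.cong refl)
      fix k show "cnj (y $ k) * (complex_of_real (a k) * y $ k) = complex_of_real (a k * (cmod (y $ k))^2)"
        using cnj_mult_self[of "y $ k"] by (simp add: algebra_simps)
    qed
    finally have "Re (quad_form (U ** Da ** adjoint_mat U) x) = (\<Sum>k\<in>UNIV. a k * (cmod (y $ k))^2)"
      by (simp add: Re_sum)
    also have "\<dots> > 0"
      by (rule sum_pos2[of UNIV i]) (use i a in \<open>auto intro: mult_pos_pos mult_nonneg_nonneg less_imp_le\<close>, simp add: a less_imp_le)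
    finally show ?thesis .
  qed
  show ?thesis unfolding pd_mat_def Da_def[symmetric] using herm pos by auto
qed

lemma F_Inf:
  assumes F: "F_convex_incr f"
  shows "bdd_below (f ` {0<..})" "\<And>x. x > 0 \<Longrightarrow> Inf (f ` {0<..}) \<le> f x"
    "ext0 f 0 = Inf (f ` {0<..})"
proof -
  define L where "L = Inf (f ` {0<..})"
  show bdd: "bdd_below (f ` {0<..})" using F_lb[OF F] by (intro bdd_belowI2) auto
  show lb: "\<And>x. x > 0 \<Longrightarrow> Inf (f ` {0<..}) \<le> f x" using bdd by (intro cInf_lower) auto
  have mono: "mono_on {0<..} f" using F_props[OF F] by auto
  have "(f \<longlongrightarrow> L) (at_right 0)"
  proof (rule tendstoI)
    fix e :: real assume e: "e > 0"
    have "L < L + e" using e by simp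
    then obtain x0 where x0: "x0 > 0" "f x0 < L + e"
      using cInf_less_iff[of "f ` {0<..}" "L + e"] bdd \<open>L < L + e\<close> unfolding L_def[symmetric] by auto
    show "eventually (\<lambda>x. dist (f x) L < e) (at_right 0)"
      unfolding eventually_at_right_field
    proof (intro exI[of _ x0] conjI allI impI x0)
      fix y :: real assume y: "0 < y" "y < x0"
      have "f y \<le> f x0" using y x0 by (intro mono_onD[OF mono]) auto
      moreover have "L \<le> f y" using lb[of y] y unfolding L_def by simp
      ultimately show "dist (f y) L < e" using x0 by (simp add: dist_real_def)
    qed
  qed
  then have "Lim (at_right 0) f = L" by (intro tendsto_Lim) (simp add: trivial_limit_at_right_real)
  then show "ext0 f 0 = Inf (f ` {0<..})" unfolding ext0_def L_def by simp
qed

lemma fenchel_young: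
  assumes F: "F_convex_incr f" and a: "a > 0" and b: "b \<ge> 0"
  shows "a * b \<le> conj_fun f a + ext0 f b"
proof (cases "b > 0")
  case True
  then show ?thesis using conj_ge[OF F a True] by (simp add: ext0_def mult.commute)
next
  case False
  then have b0: "b = 0" using b by simp
  have "- conj_fun f a \<le> Inf (f ` {0<..})"
  proof (rule cInf_greatest)
    show "f ` {0<..} \<noteq> {}" by auto
    fix y assume "y \<in> f ` {0<..}"
    then obtain x where x: "x > 0" "y = f x" by auto
    have "x * a - f x \<le> conj_fun f a" using conj_ge[OF F a x(1)] .
    moreover have "0 \<le> x * a" using x a by simp
    ultimately show "- conj_fun f a \<le> y" using x by simp
  qed
  then show ?thesis using b0 F_Inf(3)[OF F] by simp
qed

lemma approx:
  assumes F: "F_convex_incr f" and b: "b \<ge> 0" and e: "e > 0"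
  shows "\<exists>a>0. ext0 f b - e < a * b - conj_fun f a"
proof (cases "b > 0")
  case True
  have "f b - e < conj_fun (conj_fun f) b" using conj_conj[OF F True] e by simp
  then have "f b - e < (SUP x\<in>{0<..}. x * b - conj_fun f x)" unfolding conj_fun_def[of "conj_fun f"] .
  then obtain a where "a > 0" "f b - e < a * b - conj_fun f a"
    using less_cSUP_iff[OF _ conj_bdd[OF conj_F[OF F] True]] by auto
  then show ?thesis using True by (auto simp: ext0_def)
next
  case False
  then have b0: "b = 0" using b by simp
  define L where "L = Inf (f ` {0<..})"
  have lb: "\<And>x. x > 0 \<Longrightarrow> L \<le> f x" using F_Inf(2)[OF F] unfolding L_def .
  obtain N where N: "N > 0" "\<And>x. x \<ge> N \<Longrightarrow> 1 * x \<le> f x" using F_superlin[OF F, of 1] by auto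
  define X where "X = max N (2 * \<bar>L\<bar> + 1)"
  have X: "X > 0" unfolding X_def using N by auto
  define a where "a = min (1/2) (e / (2 * X))"
  have a: "a > 0" "a \<le> 1/2" "X * a \<le> e / 2" unfolding a_def using e X
    by (auto simp: min_def field_simps)
  have "conj_fun f a \<le> e / 2 - L"
  proof (rule conj_le)
    fix x :: real assume x: "x > 0"
    show "x * a - f x \<le> e / 2 - L"
    proof (cases "x \<ge> X")
      case True
      then have "x \<le> f x" using N(2)[of x] unfolding X_def by auto
      moreover have "x * a \<le> x * (1/2)" using x a by (intro mult_left_mono) auto
      moreover have "2 * \<bar>L\<bar> + 1 \<le> x" using True unfolding X_def by auto
      ultimately show ?thesis using e by linarith
    next
      case False
      then have "x * a \<le> X * a" using a by (intro mult_right_mono) auto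
      then show ?thesis using a(3) lb[OF x] by linarith
    qed
  qed
  then show ?thesis using a e b0 F_Inf(3)[OF F] unfolding L_def by (intro exI[of _ a]) auto
qed

lemma partB:
  fixes B :: "complex^'n^'n"
  assumes F: "F_convex_incr f" and psd: "psd_mat B"
  shows "Re (trace (mat_fun (ext0 f) B)) =
        (SUP A\<in>{A :: complex^'n^'n. pd_mat A}.
            Re (trace (A ** B)) - Re (trace (mat_fun (conj_fun f) A)))"
proof -
  have HB: "hermitian_mat B" using psd by (simp add: psd_mat_def)
  obtain U b where U: "unitary_mat U" and Bd: "B = U ** diag_mat (\<lambda>i. complex_of_real (b i)) ** adjoint_mat U"
    using spectral[OF HB] by blast
  have b0: "\<And>j. b j \<ge> 0" using psd_eig_nonneg[OF psd U Bd] .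
  define S where "S = (\<Sum>j\<in>UNIV. ext0 f (b j))"
  have lhs: "Re (trace (mat_fun (ext0 f) B)) = S" unfolding S_def by (rule mat_fun_trace[OF U Bd])
  define val where "val = (\<lambda>A :: complex^'n^'n. Re (trace (A ** B)) - Re (trace (mat_fun (conj_fun f) A)))"
  have upper: "val A \<le> S" if A: "pd_mat A" for A
  proof -
    have HA: "hermitian_mat A" using A by (simp add: pd_mat_def)
    obtain V a where V: "unitary_mat V" and Ad: "A = V ** diag_mat (\<lambda>i. complex_of_real (a i)) ** adjoint_mat V"
      using spectral[OF HA] by blast
    have a0: "\<And>i. a i > 0" using pd_eig_pos[OF A V Ad] .
    define W where "W = adjoint_mat V ** U"
    have Wu: "unitary_mat W" unfolding W_def using unitary_mult[OF U V] .
    define P where "P = (\<lambda>i k. (cmod (W $ i $ k))^2)"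
    have tr: "Re (trace (A ** B)) = (\<Sum>i\<in>UNIV. \<Sum>k\<in>UNIV. a i * b k * P i k)"
      unfolding Ad Bd P_def W_def by (rule trace_prod[OF U V])
    have mf: "Re (trace (mat_fun (conj_fun f) A)) = (\<Sum>i\<in>UNIV. conj_fun f (a i))"
      by (rule mat_fun_trace[OF V Ad])
    have "(\<Sum>i\<in>UNIV. \<Sum>k\<in>UNIV. a i * b k * P i k)
        \<le> (\<Sum>i\<in>UNIV. \<Sum>k\<in>UNIV. (conj_fun f (a i) + ext0 f (b k)) * P i k)"
      unfolding P_def using fenchel_young[OF F a0 b0]
      by (intro sum_mono mult_right_mono) auto
    also have "\<dots> = (\<Sum>i\<in>UNIV. \<Sum>k\<in>UNIV. conj_fun f (a i) * P i k) + (\<Sum>i\<in>UNIV. \<Sum>k\<in>UNIV. ext0 f (b k) * P i k)"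
      by (simp add: distrib_right sum.distrib)
    also have "(\<Sum>i\<in>UNIV. \<Sum>k\<in>UNIV. ext0 f (b k) * P i k) = (\<Sum>k\<in>UNIV. \<Sum>i\<in>UNIV. ext0 f (b k) * P i k)"
      by (rule sum.swap)
    also have "(\<Sum>i\<in>UNIV. \<Sum>k\<in>UNIV. conj_fun f (a i) * P i k) + (\<Sum>k\<in>UNIV. \<Sum>i\<in>UNIV. ext0 f (b k) * P i k)
       = (\<Sum>i\<in>UNIV. conj_fun f (a i) * (\<Sum>k\<in>UNIV. P i k)) + (\<Sum>k\<in>UNIV. ext0 f (b k) * (\<Sum>i\<in>UNIV. P i k))"
      by (simp add: sum_distrib_left)
    also have "\<dots> = (\<Sum>i\<in>UNIV. conj_fun f (a i)) + S"
      unfolding S_def P_def using unitary_rows[OF Wu] unitary_cols[OF Wu] by simp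
    finally show ?thesis unfolding val_def tr mf by simp
  qed
  have lower: "\<exists>A. pd_mat A \<and> S - e < val A" if e: "e > 0" for e
  proof -
    define n where "n = real (CARD('n))"
    have n: "n > 0" unfolding n_def by simp
    have "\<forall>j. \<exists>a>0. ext0 f (b j) - e / n < a * b j - conj_fun f a"
      using approx[OF F b0] e n by auto
    then obtain a where a: "\<And>j. a j > 0" "\<And>j. ext0 f (b j) - e / n < a j * b j - conj_fun f (a j)"
      by metis
    define A where "A = U ** diag_mat (\<lambda>i. complex_of_real (a i)) ** adjoint_mat U"
    have pdA: "pd_mat A" unfolding A_def using pd_construct[OF U a(1)] .
    have UU: "adjoint_mat U ** U = mat 1" using U by (simp add: unitary_mat_def)
    have tr: "Re (trace (A ** B)) = (\<Sum>i\<in>UNIV. a i * b i)"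
      unfolding A_def Bd trace_prod[OF U U] UU mat1_entry
    proof (intro sum.cong refl)
      fix i
      have "(\<Sum>k\<in>UNIV. a i * b k * (cmod (if i = k then 1 else 0))^2) = (\<Sum>k\<in>UNIV. if k = i then a i * b i else 0)"
        by (intro sum.cong) auto
      then show "(\<Sum>k\<in>UNIV. a i * b k * (cmod (if i = k then 1 else 0))^2) = a i * b i" by simp
    qed
    have mf: "Re (trace (mat_fun (conj_fun f) A)) = (\<Sum>i\<in>UNIV. conj_fun f (a i))"
      by (rule mat_fun_trace[OF U A_def])
    have "S - e = (\<Sum>j\<in>UNIV. ext0 f (b j) - e / n)"
      unfolding S_def n_def using n by (simp add: sum_subtractf n_def)
    also have "\<dots> < (\<Sum>j\<in>UNIV. a j * b j - conj_fun f (a j))"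
      by (rule sum_strict_mono) (use a in auto)
    also have "\<dots> = val A" unfolding val_def tr mf by (simp add: sum_subtractf)
    finally show ?thesis using pdA by blast
  qed
  have ne: "{A :: complex^'n^'n. pd_mat A} \<noteq> {}"
    using pd_construct[OF U, of "\<lambda>_. 1"] by auto
  have bdd: "bdd_above (val ` {A. pd_mat A})" using upper by (intro bdd_aboveI2) auto
  have "(SUP A\<in>{A. pd_mat A}. val A) = S"
  proof (rule antisym)
    show "(SUP A\<in>{A. pd_mat A}. val A) \<le> S" using ne upper by (intro cSUP_least) auto
    show "S \<le> (SUP A\<in>{A. pd_mat A}. val A)"
    proof (rule field_le_epsilon)
      fix e :: real assume "e > 0"
      then obtain A where "pd_mat A" "S - e < val A" using lower by blast
      moreover have "val A \<le> (SUP A\<in>{A. pd_mat A}. val A)" using bdd \<open>pd_mat A\<close> by (intro cSUP_upper) auto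
      ultimately show "S \<le> (SUP A\<in>{A. pd_mat A}. val A) + e" by linarith
    qed
  qed
  then show ?thesis unfolding lhs val_def by simp
qed

theorem lemmaA1:
  shows
   "(\<forall>f. F_convex_incr f \<longrightarrow>
        F_convex_incr (conj_fun f) \<and> (\<forall>x>0. conj_fun (conj_fun f) x = f x))
    \<and>
    (\<forall>f (B :: complex^'n^'n). F_convex_incr f \<longrightarrow> psd_mat B \<longrightarrow>
        Re (trace (mat_fun (ext0 f) B)) =
        (SUP A\<in>{A :: complex^'n^'n. pd_mat A}.
            Re (trace (A ** B)) - Re (trace (mat_fun (conj_fun f) A))))
    \<and>
    (\<forall>(f :: real \<Rightarrow> real) (r :: real).
        mono_on {0<..} f \<longrightarrow> (\<exists>x>0. \<exists>y>0. f x \<noteq> f y) \<longrightarrow> 0 < r \<longrightarrow> r < 1 \<longrightarrow>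
        (convex_on {0<..} (\<lambda>x. f (x powr (1 - r))) \<longleftrightarrow>
         F_convex_incr f \<and> concave_on {0<..} (\<lambda>x. conj_fun f (x powr r))))"
proof -
  have a: "\<forall>f. F_convex_incr f \<longrightarrow>
        F_convex_incr (conj_fun f) \<and> (\<forall>x>0. conj_fun (conj_fun f) x = f x)"
    using conj_F conj_conj by blast
  have b: "\<forall>f (B :: complex^'n^'n). F_convex_incr f \<longrightarrow> psd_mat B \<longrightarrow>
        Re (trace (mat_fun (ext0 f) B)) =
        (SUP A\<in>{A :: complex^'n^'n. pd_mat A}.
            Re (trace (A ** B)) - Re (trace (mat_fun (conj_fun f) A)))"
    using partB by blast
  have c: "\<forall>(f :: real \<Rightarrow> real) (r :: real).
        mono_on {0<..} f \<longrightarrow> (\<exists>x>0. \<exists>y>0. f x \<noteq> f y) \<longrightarrow> 0 < r \<longrightarrow> r < 1 \<longrightarrow>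
        (convex_on {0<..} (\<lambda>x. f (x powr (1 - r))) \<longleftrightarrow>
         F_convex_incr f \<and> concave_on {0<..} (\<lambda>x. conj_fun f (x powr r)))"
    using partC by blast
  show ?thesis using a b c by blast
qed

end
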